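(* Let $R$ be a ring such that $\big[[R,R],[R,R]^2\big]=\{0\}$. Then the commutator ideal of $R$ (the two-sided ideal generated by all commutators $[x,y]$, $x,y\in R$) is nil, i.e. each of its elements is nilpotent.
   Context: Rings are associative, not necessarily unital. For $x,y\in R$, $[x,y]=xy-yx$. For subsets $X,Y\subseteq R$, $[X,Y]$ denotes the additive subgroup generated by all $[x,y]$ with $x\in X$, $y\in Y$; $XY$ denotes the additive subgroup generated by all products $xy$; and $X^2=XX$. *)

theory Defs
  imports Main
begin

text \<open>Rings are associative, not necessarily unital: we use the type class ring
(no multiplicative unit).\<close>

definition add_subgroup :: "'a::ab_group_add set \<Rightarrow> bool" where
  "add_subgroup H \<longleftrightarrow> 0 \<in> H \<and> (\<forall>x\<in>H. \<forall>y\<in>H. x - y \<in> H)"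

definition add_span :: "'a::ab_group_add set \<Rightarrow> 'a set" where
  "add_span S = \<Inter>{H. add_subgroup H \<and> S \<subseteq> H}"

definition commutator :: "'a::ring \<Rightarrow> 'a \<Rightarrow> 'a" where
  "commutator x y = x * y - y * x"

definition comm_set :: "'a::ring set \<Rightarrow> 'a set \<Rightarrow> 'a set" where
  "comm_set X Y = add_span {commutator x y | x y. x \<in> X \<and> y \<in> Y}"

definition prod_set :: "'a::ring set \<Rightarrow> 'a set \<Rightarrow> 'a set" where
  "prod_set X Y = add_span {x * y | x y. x \<in> X \<and> y \<in> Y}"

definition ideal_gen :: "'a::ring set \<Rightarrow> 'a set" where
  "ideal_gen S = \<Inter>{I. add_subgroup I \<and> S \<subseteq> I \<and>
      (\<forall>r x. x \<in> I \<longrightarrow> r * x \<in> I \<and> x * r \<in> I)}"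

text \<open>Positive powers in a non-unital ring: pow1 x n = x^(n+1).\<close>
fun pow1 :: "'a::times \<Rightarrow> nat \<Rightarrow> 'a" where
  "pow1 x 0 = x"
| "pow1 x (Suc n) = x * pow1 x n"

definition nilpotent_elem :: "'a::ring \<Rightarrow> bool" where
  "nilpotent_elem x \<longleftrightarrow> (\<exists>n. pow1 x n = 0)"

end

theory Submission
  imports Defs
begin

definition is_ideal :: "'a::ring set \<Rightarrow> bool" where
  "is_ideal I \<longleftrightarrow> add_subgroup I \<and> (\<forall>r x. x \<in> I \<longrightarrow> r * x \<in> I \<and> x * r \<in> I)"

lemma sg_zero: "add_subgroup H \<Longrightarrow> 0 \<in> H" by (simp add: add_subgroup_def)
lemma sg_diff: "add_subgroup H \<Longrightarrow> x \<in> H \<Longrightarrow> y \<in> H \<Longrightarrow> x - y \<in> H"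
  by (simp add: add_subgroup_def)
lemma sg_uminus: "add_subgroup H \<Longrightarrow> x \<in> H \<Longrightarrow> - x \<in> H"
  using sg_diff[of H 0 x] sg_zero[of H] by simp
lemma sg_add: "add_subgroup H \<Longrightarrow> x \<in> H \<Longrightarrow> y \<in> H \<Longrightarrow> x + y \<in> H"
  using sg_diff[of H x "- y"] sg_uminus[of H y] by simp

lemma span_sub: "S \<subseteq> add_span S" by (auto simp: add_span_def)
lemma span_sg: "add_subgroup (add_span S)"
  unfolding add_subgroup_def add_span_def by auto
lemma span_least: "add_subgroup H \<Longrightarrow> S \<subseteq> H \<Longrightarrow> add_span S \<subseteq> H"
  by (auto simp: add_span_def)

lemma ideal_sg: "is_ideal I \<Longrightarrow> add_subgroup I" by (simp add: is_ideal_def)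
lemma ideal_l: "is_ideal I \<Longrightarrow> x \<in> I \<Longrightarrow> r * x \<in> I" by (simp add: is_ideal_def)
lemma ideal_r: "is_ideal I \<Longrightarrow> x \<in> I \<Longrightarrow> x * r \<in> I" by (simp add: is_ideal_def)
lemma ideal_zero: "is_ideal I \<Longrightarrow> 0 \<in> I" using ideal_sg sg_zero by blast
lemma ideal_diff: "is_ideal I \<Longrightarrow> x \<in> I \<Longrightarrow> y \<in> I \<Longrightarrow> x - y \<in> I" using ideal_sg sg_diff by blast
lemma ideal_add: "is_ideal I \<Longrightarrow> x \<in> I \<Longrightarrow> y \<in> I \<Longrightarrow> x + y \<in> I" using ideal_sg sg_add by blast

lemma ideal_gen_ideal: "is_ideal (ideal_gen S)"
  unfolding is_ideal_def add_subgroup_def ideal_gen_def by auto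
lemma ideal_gen_sub: "S \<subseteq> ideal_gen S"
  unfolding ideal_gen_def by auto
lemma ideal_gen_least: "is_ideal I \<Longrightarrow> S \<subseteq> I \<Longrightarrow> ideal_gen S \<subseteq> I"
  unfolding ideal_gen_def is_ideal_def by auto

lemma zero_ideal: "is_ideal ({0}::'a::ring set)"
  by (simp add: is_ideal_def add_subgroup_def)

lemma span_ideal:
  assumes "\<And>r x. x \<in> S \<Longrightarrow> r * x \<in> S \<and> x * r \<in> S"
  shows "is_ideal (add_span S)"
proof -
  let ?H = "{z \<in> add_span S. \<forall>r. r * z \<in> add_span S \<and> z * r \<in> add_span S}"
  have sg: "add_subgroup (add_span S)" by (rule span_sg)
  have "add_subgroup ?H"
    unfolding add_subgroup_def
  proof (intro conjI ballI)
    show "0 \<in> ?H" using sg_zero[OF sg] by simp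
  next
    fix x y assume "x \<in> ?H" "y \<in> ?H"
    then show "x - y \<in> ?H" using sg_diff[OF sg]
      by (simp add: right_diff_distrib left_diff_distrib)
  qed
  moreover have "S \<subseteq> ?H" using assms span_sub by blast
  ultimately have "add_span S \<subseteq> ?H" by (rule span_least)
  then show ?thesis using sg unfolding is_ideal_def by blast
qed

lemma union_ideals_span:
  assumes "\<And>N. N \<in> \<N> \<Longrightarrow> is_ideal N" "is_ideal J"
  shows "is_ideal (add_span (J \<union> \<Union>\<N>))"
  apply (rule span_ideal)
  using assms ideal_l ideal_r by blast

lemma ideal_gen_sq:
  assumes J: "is_ideal J"
  and hS: "\<And>s t w. s \<in> S \<Longrightarrow> t \<in> S \<Longrightarrow> s * t \<in> J \<and> s * w * t \<in> J"
  and x: "x \<in> ideal_gen S" and y: "y \<in> ideal_gen S"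
  shows "x * y \<in> J"
proof -
  let ?N = "ideal_gen S"
  have N: "is_ideal ?N" by (rule ideal_gen_ideal)
  have Ys: "\<forall>y\<in>?N. s * y \<in> J" if s: "s \<in> S" for s
  proof -
    let ?Y = "{y. s * y \<in> J \<and> (\<forall>w. s * w * y \<in> J)}"
    have "is_ideal ?Y"
      unfolding is_ideal_def add_subgroup_def
    proof (intro conjI allI impI ballI)
      show "0 \<in> ?Y" using ideal_zero[OF J] by simp
    next
      fix a b assume "a \<in> ?Y" "b \<in> ?Y"
      then show "a - b \<in> ?Y" using ideal_diff[OF J]
        by (simp add: right_diff_distrib)
    next
      fix r a assume a: "a \<in> ?Y"
      have "s * (r * a) = s * r * a" by (simp add: mult.assoc)
      then have "s * (r * a) \<in> J" using a by simp
      moreover have "\<forall>w. s * w * (r * a) \<in> J"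
      proof
        fix w
        have "s * w * (r * a) = s * (w * r) * a" by (simp add: mult.assoc)
        then show "s * w * (r * a) \<in> J" using a by simp
      qed
      ultimately show "r * a \<in> ?Y" by simp
      show "a * r \<in> ?Y" using a ideal_r[OF J] by (simp add: mult.assoc[symmetric])
    qed
    moreover have "S \<subseteq> ?Y" using hS s by blast
    ultimately have "?N \<subseteq> ?Y" by (rule ideal_gen_least)
    then show ?thesis by blast
  qed
  let ?X = "{x. \<forall>y\<in>?N. x * y \<in> J}"
  have "is_ideal ?X"
    unfolding is_ideal_def add_subgroup_def
  proof (intro conjI allI impI ballI)
    show "0 \<in> ?X" using ideal_zero[OF J] by simp
  next
    fix a b assume "a \<in> ?X" "b \<in> ?X"
    then show "a - b \<in> ?X" using ideal_diff[OF J]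
      by (simp add: left_diff_distrib)
  next
    fix r a assume a: "a \<in> ?X"
    show "r * a \<in> ?X" using a ideal_l[OF J] by (simp add: mult.assoc)
    show "a * r \<in> ?X" using a ideal_l[OF N] by (simp add: mult.assoc)
  qed
  moreover have "S \<subseteq> ?X" using Ys by blast
  ultimately have "?N \<subseteq> ?X" by (rule ideal_gen_least)
  then show ?thesis using x y by blast
qed

fun prodl :: "'a::ring list \<Rightarrow> 'a" where
  "prodl [] = 0"
| "prodl (x # xs) = (if xs = [] then x else x * prodl xs)"

lemma prodl_append: "xs \<noteq> [] \<Longrightarrow> ys \<noteq> [] \<Longrightarrow> prodl (xs @ ys) = prodl xs * prodl ys"
  by (induction xs) (auto simp: mult.assoc)

lemma pow1_prodl: "pow1 z n = prodl (replicate (Suc n) z)"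
  by (induction n) auto

lemma prodl_diff:
  assumes N: "is_ideal N"
  shows "xs \<noteq> [] \<Longrightarrow> (\<And>x. x \<in> set xs \<Longrightarrow> f x \<in> N) \<Longrightarrow>
     prodl (map (\<lambda>x. f x + g x) xs) - prodl (map g xs) \<in> N"
proof (induction xs)
  case Nil then show ?case by simp
next
  case (Cons x xs)
  show ?case
  proof (cases "xs = []")
    case True then show ?thesis using Cons by simp
  next
    case False
    have IH: "prodl (map (\<lambda>x. f x + g x) xs) - prodl (map g xs) \<in> N"
      using Cons False by simp
    have "prodl (map (\<lambda>x. f x + g x) (x # xs)) - prodl (map g (x # xs))
       = f x * prodl (map (\<lambda>x. f x + g x) xs) + g x * (prodl (map (\<lambda>x. f x + g x) xs) - prodl (map g xs))"
      using False by (simp add: algebra_simps)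
    also have "\<dots> \<in> N" using ideal_add[OF N] ideal_r[OF N] ideal_l[OF N] IH Cons.prems by simp
    finally show ?thesis .
  qed
qed

lemma pow1_add: "pow1 (x::'a::ring) (Suc (a + b)) = pow1 x a * pow1 x b"
proof (induction a)
  case 0 then show ?case by simp
next
  case (Suc a)
  have "pow1 x (Suc (Suc a + b)) = x * pow1 x (Suc (a + b))" by simp
  also have "\<dots> = x * (pow1 x a * pow1 x b)" using Suc by simp
  also have "\<dots> = pow1 x (Suc a) * pow1 x b" by (simp add: mult.assoc)
  finally show ?case .
qed

lemma pow1_pow1: "pow1 (pow1 (x::'a::ring) n) m = pow1 x (m * (n + 1) + n)"
proof (induction m)
  case 0 then show ?case by simp
next
  case (Suc m)
  have "pow1 (pow1 x n) (Suc m) = pow1 x n * pow1 x (m * (n + 1) + n)" using Suc by simp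
  also have "\<dots> = pow1 x (Suc (n + (m * (n + 1) + n)))" by (rule pow1_add[symmetric])
  also have "Suc (n + (m * (n + 1) + n)) = Suc m * (n + 1) + n" by simp
  finally show ?case .
qed

lemma nil_ext:
  assumes "pow1 z n \<in> J" "\<forall>j\<in>J. nilpotent_elem j"
  shows "nilpotent_elem z"
proof -
  obtain m where "pow1 (pow1 z n) m = 0" using assms unfolding nilpotent_elem_def by blast
  then show ?thesis unfolding nilpotent_elem_def pow1_pow1 by blast
qed


primrec sumset :: "'a::ring set \<Rightarrow> 'a set list \<Rightarrow> 'a set" where
  "sumset J [] = J"
| "sumset J (N # Ns) = {a + b | a b. a \<in> N \<and> b \<in> sumset J Ns}"

lemma minkowski_ideal:
  assumes N: "is_ideal N" and M: "is_ideal M"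
  shows "is_ideal {a + b | a b. a \<in> N \<and> b \<in> M}"
  unfolding is_ideal_def add_subgroup_def
proof (intro conjI allI impI ballI)
  show "0 \<in> {a + b | a b. a \<in> N \<and> b \<in> M}" using ideal_zero[OF N] ideal_zero[OF M] by force
next
  fix x y assume "x \<in> {a + b | a b. a \<in> N \<and> b \<in> M}" "y \<in> {a + b | a b. a \<in> N \<and> b \<in> M}"
  then obtain a b a' b' where "x = a + b" "y = a' + b'" "a \<in> N" "b \<in> M" "a' \<in> N" "b' \<in> M" by blast
  moreover have "a + b - (a' + b') = (a - a') + (b - b')" by (simp add: algebra_simps)
  ultimately show "x - y \<in> {a + b | a b. a \<in> N \<and> b \<in> M}"
    using ideal_diff[OF N] ideal_diff[OF M] by blast
next
  fix r x assume "x \<in> {a + b | a b. a \<in> N \<and> b \<in> M}"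
  then obtain a b where ab: "x = a + b" "a \<in> N" "b \<in> M" by blast
  have "r * x = r * a + r * b" "x * r = a * r + b * r" using ab by (simp_all add: algebra_simps)
  then show "r * x \<in> {a + b | a b. a \<in> N \<and> b \<in> M}" "x * r \<in> {a + b | a b. a \<in> N \<and> b \<in> M}"
    using ab ideal_l[OF N] ideal_l[OF M] ideal_r[OF N] ideal_r[OF M] by blast+
qed

lemma sumset_ideal:
  assumes J: "is_ideal J"
  shows "(\<forall>N\<in>set Ns. is_ideal N) \<Longrightarrow> is_ideal (sumset J Ns) \<and> J \<subseteq> sumset J Ns"
proof (induction Ns)
  case Nil then show ?case using J by simp
next
  case (Cons N Ns)
  then have N: "is_ideal N" and IH: "is_ideal (sumset J Ns)" "J \<subseteq> sumset J Ns" by auto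
  have "is_ideal (sumset J (N # Ns))" using minkowski_ideal[OF N IH(1)] by simp
  moreover have "J \<subseteq> sumset J (N # Ns)"
  proof
    fix x assume "x \<in> J"
    then have "x = 0 + x" "0 \<in> N" "x \<in> sumset J Ns" using IH ideal_zero[OF N] by auto
    then show "x \<in> sumset J (N # Ns)" by (simp, blast)
  qed
  ultimately show ?case by blast
qed

lemma sumset_diff:
  assumes J: "is_ideal J" and Ns2: "\<forall>N\<in>set Ns2. is_ideal N"
  shows "x \<in> sumset J Ns1 \<Longrightarrow> y \<in> sumset J Ns2 \<Longrightarrow> x - y \<in> sumset J (Ns1 @ Ns2)"
proof (induction Ns1 arbitrary: x)
  case Nil
  have "is_ideal (sumset J Ns2)" "J \<subseteq> sumset J Ns2" using sumset_ideal[OF J Ns2] by auto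
  then show ?case using Nil ideal_diff by fastforce
next
  case (Cons N Ns1)
  then obtain a b where ab: "x = a + b" "a \<in> N" "b \<in> sumset J Ns1" by auto
  have "b - y \<in> sumset J (Ns1 @ Ns2)" using Cons ab by blast
  moreover have "x - y = a + (b - y)" using ab by (simp add: algebra_simps)
  ultimately show ?case using ab by (simp only: sumset.simps append_Cons) blast
qed

lemma sumset_nilp:
  assumes J: "is_ideal J"
  shows "(\<forall>N\<in>set Ns. is_ideal N \<and> (\<forall>x\<in>N. \<forall>y\<in>N. x * y \<in> J)) \<Longrightarrow>
    \<forall>xs. length xs = 2 ^ length Ns \<longrightarrow> set xs \<subseteq> sumset J Ns \<longrightarrow> prodl xs \<in> J"
proof (induction Ns)
  case Nil
  show ?case
  proof (intro allI impI)
    fix xs :: "'a list" assume "length xs = 2 ^ length []" "set xs \<subseteq> sumset J []"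
    then obtain x where "xs = [x]" "x \<in> J" by (cases xs) auto
    then show "prodl xs \<in> J" by simp
  qed
next
  case (Cons N Ns)
  then have N: "is_ideal N" and NN: "\<forall>x\<in>N. \<forall>y\<in>N. x * y \<in> J"
    and IH: "\<forall>xs. length xs = 2 ^ length Ns \<longrightarrow> set xs \<subseteq> sumset J Ns \<longrightarrow> prodl xs \<in> J"
    by auto
  let ?k = "2 ^ length Ns :: nat"
  let ?M = "sumset J Ns"
  have kpos: "?k > 0" by simp
  have A: "\<exists>n\<in>N. \<exists>j\<in>J. prodl xs = n + j"
    if len: "length xs = ?k" and sub: "set xs \<subseteq> sumset J (N # Ns)" for xs
  proof -
    have ex: "\<forall>x\<in>set xs. \<exists>a. a \<in> N \<and> x - a \<in> ?M"
    proof
      fix x assume "x \<in> set xs"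
      then obtain a b where "x = a + b" "a \<in> N" "b \<in> ?M" using sub by auto
      then show "\<exists>a. a \<in> N \<and> x - a \<in> ?M" by (intro exI[of _ a]) simp
    qed
    define fa where "fa x = (SOME a. a \<in> N \<and> x - a \<in> ?M)" for x
    define fb where "fb x = x - fa x" for x
    have fab: "fa x \<in> N \<and> fb x \<in> ?M" if "x \<in> set xs" for x
      using someI_ex[OF ex[rule_format, OF that]] unfolding fa_def fb_def by blast
    have eq: "map (\<lambda>x. fa x + fb x) xs = xs" unfolding fb_def by (induction xs) auto
    have ne: "xs \<noteq> []" using len kpos by auto
    have d: "prodl (map (\<lambda>x. fa x + fb x) xs) - prodl (map fb xs) \<in> N"
      using prodl_diff[OF N ne] fab by blast
    have "set (map fb xs) \<subseteq> ?M" using fab by auto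
    then have j: "prodl (map fb xs) \<in> J" using IH len by simp
    show ?thesis using d j eq by (intro bexI[of _ "prodl xs - prodl (map fb xs)"] bexI[of _ "prodl (map fb xs)"]) auto
  qed
  show ?case
  proof (intro allI impI)
    fix xs :: "'a list" assume len: "length xs = 2 ^ length (N # Ns)" and sub: "set xs \<subseteq> sumset J (N # Ns)"
    let ?xs1 = "take ?k xs" and ?xs2 = "drop ?k xs"
    have l1: "length ?xs1 = ?k" and l2: "length ?xs2 = ?k" using len by auto
    have s1: "set ?xs1 \<subseteq> sumset J (N # Ns)" and s2: "set ?xs2 \<subseteq> sumset J (N # Ns)"
      using subset_trans[OF set_take_subset sub] subset_trans[OF set_drop_subset sub] by auto
    obtain n1 j1 where n1: "n1 \<in> N" "j1 \<in> J" "prodl ?xs1 = n1 + j1" using A[OF l1 s1] by blast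
    obtain n2 j2 where n2: "n2 \<in> N" "j2 \<in> J" "prodl ?xs2 = n2 + j2" using A[OF l2 s2] by blast
    have ne: "?xs1 \<noteq> []" "?xs2 \<noteq> []" using l1 l2 kpos by auto
    have "prodl xs = prodl (?xs1 @ ?xs2)" by simp
    also have "\<dots> = (n1 + j1) * (n2 + j2)" using prodl_append[OF ne] n1 n2 by simp
    also have "\<dots> = n1 * n2 + (n1 * j2 + j1 * (n2 + j2))" by (simp add: algebra_simps)
    also have "\<dots> \<in> J" using NN n1 n2 ideal_add[OF J] ideal_l[OF J] ideal_r[OF J] by simp
    finally show "prodl xs \<in> J" .
  qed
qed

lemma GL:
  assumes J: "is_ideal J"
  and NN: "\<And>N. N \<in> NS \<Longrightarrow> is_ideal N \<and> (\<forall>x\<in>N. \<forall>y\<in>N. x * y \<in> J)"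
  and z: "z \<in> add_span (J \<union> \<Union>NS)"
  shows "\<exists>n. pow1 z n \<in> J"
proof -
  let ?Q = "{z. \<exists>Ns. set Ns \<subseteq> NS \<and> z \<in> sumset J Ns}"
  have "add_subgroup ?Q"
    unfolding add_subgroup_def
  proof (intro conjI ballI)
    show "0 \<in> ?Q" using ideal_zero[OF J] by (intro CollectI exI[of _ "[]"]) simp
  next
    fix x y assume "x \<in> ?Q" "y \<in> ?Q"
    then obtain Ns1 Ns2 where "set Ns1 \<subseteq> NS" "x \<in> sumset J Ns1" "set Ns2 \<subseteq> NS" "y \<in> sumset J Ns2"
      by blast
    moreover then have "\<forall>N\<in>set Ns2. is_ideal N" using NN by blast
    ultimately show "x - y \<in> ?Q" using sumset_diff[OF J] 
      by (intro CollectI exI[of _ "Ns1 @ Ns2"]) auto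
  qed
  moreover have "J \<union> \<Union>NS \<subseteq> ?Q"
  proof
    fix x assume "x \<in> J \<union> \<Union>NS"
    then show "x \<in> ?Q"
    proof
      assume "x \<in> J" then show ?thesis by (intro CollectI exI[of _ "[]"]) simp
    next
      assume "x \<in> \<Union>NS"
      then obtain N where N: "N \<in> NS" "x \<in> N" by blast
      have "x = x + 0" by simp
      then have "x \<in> sumset J [N]" using N ideal_zero[OF J]
        by (simp only: sumset.simps) blast
      then show ?thesis using N by (intro CollectI exI[of _ "[N]"]) simp
    qed
  qed
  ultimately have "add_span (J \<union> \<Union>NS) \<subseteq> ?Q" by (rule span_least)
  then obtain Ns where Ns: "set Ns \<subseteq> NS" "z \<in> sumset J Ns" using z by blast
  have "\<forall>N\<in>set Ns. is_ideal N \<and> (\<forall>x\<in>N. \<forall>y\<in>N. x * y \<in> J)" using Ns NN by blast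
  note P = sumset_nilp[OF J this]
  have "prodl (replicate (2 ^ length Ns) z) \<in> J"
    using P Ns by auto
  moreover have "Suc (2 ^ length Ns - 1) = 2 ^ length Ns" by simp
  ultimately have "pow1 z (2 ^ length Ns - 1) \<in> J" using pow1_prodl by metis
  then show ?thesis by blast
qed


definition Zc :: "'a::ring \<Rightarrow> bool" where
  "Zc a \<longleftrightarrow> (\<forall>x y. commutator (commutator x y) a = 0)"

lemma herstein:
  assumes "Zc a"
  shows "commutator a x * commutator a y = 0" "commutator a x * w * commutator a y = 0"
proof -
  have I1: "commutator (commutator x (a*y)) a = a * commutator (commutator x y) a
      - commutator x a * commutator a y + commutator (commutator x a) a * y" for x y
    by (simp add: commutator_def algebra_simps)
  have A: "commutator x a * commutator a y = 0" for x y
    using I1[of x y] assms unfolding Zc_def by simp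
  have I2: "commutator a x = - commutator x a" for x by (simp add: commutator_def)
  show B: "commutator a x * commutator a y = 0" for x y using A[of x y] I2[of x] by simp
  have I3: "commutator a x * commutator a (w*y) = commutator a x * commutator a w * y + commutator a x * w * commutator a y"
    by (simp add: commutator_def algebra_simps)
  show "commutator a x * w * commutator a y = 0" using I3 B[of x "w*y"] B[of x w] by simp
qed

theorem corollary2p4:
  fixes R :: "'a::ring itself"
  assumes "comm_set (comm_set (UNIV::'a set) UNIV)
             (prod_set (comm_set (UNIV::'a set) UNIV) (comm_set UNIV UNIV)) = {0}"
  shows "\<forall>z \<in> ideal_gen {commutator x y | x y :: 'a. True}. nilpotent_elem z"
proof -
  let ?C = "comm_set (UNIV::'a set) UNIV"
  have inC: "commutator x y \<in> ?C" for x y :: 'a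
    unfolding comm_set_def by (rule subsetD[OF span_sub]) blast
  have HZ: "commutator (commutator x y) (commutator z w * commutator u v) = 0" for x y z w u v :: 'a
  proof -
    have p: "commutator z w * commutator u v \<in> prod_set ?C ?C"
      unfolding prod_set_def by (rule subsetD[OF span_sub]) (use inC in blast)
    have "commutator (commutator x y) (commutator z w * commutator u v) \<in> comm_set ?C (prod_set ?C ?C)"
      unfolding comm_set_def[of ?C "prod_set ?C ?C"] by (rule subsetD[OF span_sub]) (use p inC in blast)
    then show ?thesis using assms by simp
  qed
  have Zcc: "Zc (commutator z w * commutator u v)" for z w u v :: 'a
    unfolding Zc_def using HZ by blast
  let ?comms = "{commutator x y | x y :: 'a. True}"
  define NS1 where "NS1 = {ideal_gen {commutator a r | r. True} | a :: 'a. Zc a}"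
  define K1 where "K1 = add_span ({0} \<union> \<Union>NS1)"
  have NS1: "is_ideal N \<and> (\<forall>x\<in>N. \<forall>y\<in>N. x * y \<in> {0})" if Nin: "N \<in> NS1" for N
  proof -
    obtain a where a: "Zc a" "N = ideal_gen {commutator a r | r. True}" using Nin NS1_def by blast
    have hS: "s * t \<in> {0} \<and> s * w * t \<in> {0}"
      if "s \<in> {commutator a r | r. True}" "t \<in> {commutator a r | r. True}" for s t w
    proof -
      note st0 = that
      obtain r1 r2 where "s = commutator a r1" "t = commutator a r2" using st0 by blast
      then show ?thesis using herstein[OF a(1)] by simp
    qed
    have "x * y \<in> {0}" if "x \<in> N" "y \<in> N" for x y
      using ideal_gen_sq[OF zero_ideal hS] that a(2) by blast
    then show ?thesis using ideal_gen_ideal a(2) by blast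
  qed
  have K1i: "is_ideal K1" unfolding K1_def by (rule union_ideals_span[OF _ zero_ideal]) (use NS1 in blast)
  have K1n: "\<forall>z\<in>K1. nilpotent_elem z"
  proof
    fix z assume z: "z \<in> K1"
    have "\<exists>n. pow1 z n \<in> {0}"
      apply (rule GL[where NS=NS1])
        apply (rule zero_ideal)
       apply (erule NS1)
      using z unfolding K1_def apply simp
      done
    then obtain n where "pow1 z n \<in> {0}" by blast
    then show "nilpotent_elem z" unfolding nilpotent_elem_def by blast
  qed
  have K1c: "commutator a r \<in> K1" if "Zc a" for a r
  proof -
    have m: "ideal_gen {commutator a r | r. True} \<in> NS1" unfolding NS1_def using that by blast
    have "commutator a r \<in> ideal_gen {commutator a r | r. True}"
      by (rule subsetD[OF ideal_gen_sub]) blast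
    then have "commutator a r \<in> {0} \<union> \<Union>NS1" using m by blast
    then show ?thesis unfolding K1_def by (rule subsetD[OF span_sub])
  qed
  define NS2 where "NS2 = {ideal_gen {c * c} | c. c \<in> ?comms}"
  define K2 where "K2 = add_span (K1 \<union> \<Union>NS2)"
  have cube: "c * c * c \<in> K1" if cin: "c \<in> ?comms" for c
  proof -
    obtain x y where c: "c = commutator x y" using cin by blast
    have e1: "commutator x y * commutator x (y*x) = commutator x y * commutator x y * x"
      by (simp add: commutator_def algebra_simps)
    have e2: "c * c * c = commutator (c * c * x) y - commutator (c * c) y * x"
      unfolding c by (simp add: commutator_def algebra_simps)
    have "commutator (commutator x y * commutator x (y*x)) y \<in> K1" by (rule K1c[OF Zcc])
    then have 1: "commutator (c * c * x) y \<in> K1" unfolding c e1 .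
    have "commutator (commutator x y * commutator x y) y \<in> K1" by (rule K1c[OF Zcc])
    then have 2: "commutator (c * c) y * x \<in> K1" unfolding c by (rule ideal_r[OF K1i])
    show ?thesis unfolding e2 by (rule ideal_diff[OF K1i 1 2])
  qed
  have NS2: "is_ideal N \<and> (\<forall>x\<in>N. \<forall>y\<in>N. x * y \<in> K1)" if Nin: "N \<in> NS2" for N
  proof -
    obtain c where c: "c \<in> ?comms" "N = ideal_gen {c * c}" using Nin NS2_def by blast
    have cc: "commutator (c * c) w \<in> K1" for w using c(1) K1c Zcc by blast
    have h: "s * t \<in> K1 \<and> s * w * t \<in> K1" if "s \<in> {c * c}" "t \<in> {c * c}" for s t w
    proof -
      have e: "c * c * w * (c * c) = commutator (c * c) w * (c * c) + w * (c * c * c) * c"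
        by (simp add: commutator_def algebra_simps)
      have e2: "c * c * (c * c) = (c * c * c) * c" by (simp add: mult.assoc)
      show ?thesis using that e e2 cube[OF c(1)] cc ideal_add[OF K1i] ideal_l[OF K1i] ideal_r[OF K1i]
        by simp
    qed
    show ?thesis using c ideal_gen_ideal ideal_gen_sq[OF K1i h] by blast
  qed
  have K2i: "is_ideal K2" unfolding K2_def by (rule union_ideals_span[OF _ K1i]) (use NS2 in blast)
  have K2n: "\<forall>z\<in>K2. nilpotent_elem z"
  proof
    fix z assume z: "z \<in> K2"
    have "\<exists>n. pow1 z n \<in> K1"
      apply (rule GL[where NS=NS2])
        apply (rule K1i)
       apply (erule NS2)
      using z unfolding K2_def apply simp
      done
    then obtain n where "pow1 z n \<in> K1" by blast
    then show "nilpotent_elem z" using nil_ext K1n by blast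
  qed
  have K12: "K1 \<subseteq> K2" unfolding K2_def using span_sub[of "K1 \<union> \<Union>NS2"] by (rule subset_trans[rotated]) simp
  have K2c: "c * c \<in> K2" if "c \<in> ?comms" for c
  proof -
    have m: "ideal_gen {c * c} \<in> NS2" unfolding NS2_def using that by blast
    have "c * c \<in> ideal_gen {c * c}" by (rule subsetD[OF ideal_gen_sub]) simp
    then have "c * c \<in> K1 \<union> \<Union>NS2" using m by blast
    then show ?thesis unfolding K2_def by (rule subsetD[OF span_sub])
  qed
  define NS3 where "NS3 = {ideal_gen {c * d | d. d \<in> ?comms} | c. c \<in> ?comms}"
  define K3 where "K3 = add_span (K2 \<union> \<Union>NS3)"
  have NS3: "is_ideal N \<and> (\<forall>x\<in>N. \<forall>y\<in>N. x * y \<in> K2)" if Nin: "N \<in> NS3" for N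
  proof -
    obtain c where c: "c \<in> ?comms" "N = ideal_gen {c * d | d. d \<in> ?comms}" using Nin NS3_def by blast
    have h: "s * t \<in> K2 \<and> s * w * t \<in> K2" if "s \<in> {c * d | d. d \<in> ?comms}" "t \<in> {c * d | d. d \<in> ?comms}" for s t w
    proof -
      note st0 = that
      obtain d e where de: "s = c * d" "t = c * e" "d \<in> ?comms" "e \<in> ?comms" using st0 by blast
      have cd: "commutator (c * d) r \<in> K2" for r using c(1) de(3) K1c Zcc K12 by blast
      have e1: "c * d * (c * e) = commutator (c * d) c * e + c * c * d * e"
        by (simp add: commutator_def algebra_simps)
      have e2: "c * d * w * (c * e) = commutator (c * d) w * (c * e) + w * (c * d * (c * e))"
        by (simp add: commutator_def algebra_simps)
      have st: "s * t \<in> K2" using de e1 cd K2c[OF c(1)] ideal_add[OF K2i] ideal_r[OF K2i] by simp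
      have "s * w * t \<in> K2" using de e2 cd st ideal_add[OF K2i] ideal_r[OF K2i] ideal_l[OF K2i] by simp
      then show ?thesis using st by blast
    qed
    show ?thesis using c ideal_gen_ideal ideal_gen_sq[OF K2i h] by blast
  qed
  have K3i: "is_ideal K3" unfolding K3_def by (rule union_ideals_span[OF _ K2i]) (use NS3 in blast)
  have K3n: "\<forall>z\<in>K3. nilpotent_elem z"
  proof
    fix z assume z: "z \<in> K3"
    have "\<exists>n. pow1 z n \<in> K2"
      apply (rule GL[where NS=NS3])
        apply (rule K2i)
       apply (erule NS3)
      using z unfolding K3_def apply simp
      done
    then obtain n where "pow1 z n \<in> K2" by blast
    then show "nilpotent_elem z" using nil_ext K2n by blast
  qed
  have K3c: "c * d \<in> K3" if "c \<in> ?comms" "d \<in> ?comms" for c d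
  proof -
    have m: "ideal_gen {c * d | d. d \<in> ?comms} \<in> NS3" unfolding NS3_def using that(1) by blast
    have "c * d \<in> ideal_gen {c * d | d. d \<in> ?comms}" by (rule subsetD[OF ideal_gen_sub]) (use that(2) in blast)
    then have "c * d \<in> K2 \<union> \<Union>NS3" using m by blast
    then show ?thesis unfolding K3_def by (rule subsetD[OF span_sub])
  qed
  have fin: "s * t \<in> K3 \<and> s * w * t \<in> K3" if "s \<in> ?comms" "t \<in> ?comms" for s t w
  proof -
    have st: "s * t \<in> K3" using K3c that by blast
    have e: "s * w * t = s * t * w + s * commutator w t" by (simp add: commutator_def algebra_simps)
    have "commutator w t \<in> ?comms" by blast
    then have "s * commutator w t \<in> K3" using K3c that by blast
    then have "s * w * t \<in> K3" using e st ideal_add[OF K3i] ideal_r[OF K3i] by simp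
    then show ?thesis using st by blast
  qed
  show ?thesis
  proof
    fix z assume zin: "z \<in> ideal_gen ?comms"
    have "z * z \<in> K3" by (rule ideal_gen_sq[where S="?comms", OF K3i fin zin zin])
    then have "pow1 z 1 \<in> K3" by simp
    then show "nilpotent_elem z" using nil_ext K3n by blast
  qed
qed

end
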